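(* Let $\alpha\in\mathbb{R}\setminus\{0\}$, fix $z>0$, and let $\lambda\le\frac34\alpha^2$, $\kappa=\sqrt{\alpha^2-\lambda}$. Then $$\Big|M\Big(\tfrac12+j+|m|+m\tfrac{\alpha}{\kappa},\,1+j+2|m|,\,z\Big)\Big|\le e^{2z}\qquad\forall m\in\mathbb{Z},\ j=0,1.$$ Moreover, there exist $\lambda_c\le\frac34\alpha^2$ and $m_c\in\mathbb{N}$, with $m_c$ independent of $\lambda_c$, such that for all $\lambda\in(0,\lambda_c)$ and all $m\in\mathbb{Z}$ with $|m|\ge m_c$, $$M\Big(\tfrac12+|m|+m\tfrac{\alpha}{\kappa},\,1+2|m|,\,z\Big)\ge\tfrac12.$$
   Context: $M(a,b,z)=\sum_{n\ge0}\frac{(a)_n}{(b)_n}\frac{z^n}{n!}$ is Kummer's confluent hypergeometric function, with $(a)_n=a(a+1)\cdots(a+n-1)$, $(a)_0=1$. *)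

theory Defs
  imports Complex_Main
begin

definition kummerM :: "real \<Rightarrow> real \<Rightarrow> real \<Rightarrow> real" where
  "kummerM a b z = (\<Sum>n. pochhammer a n / pochhammer b n * z ^ n / fact n)"

end

theory Submission
  imports Defs
begin

lemma exp_sums_real: "(\<lambda>n. x^n / fact n) sums exp (x::real)"
  using exp_converges[of x] by (simp add: divide_inverse scaleR_conv_of_real mult.commute)

lemma poch_ratio_bound:
  fixes a b c :: real
  assumes "b > 0" "c \<ge> 0" "\<And>k::nat. \<bar>a + k\<bar> \<le> c*(b+k)"
  shows "\<bar>pochhammer a n / pochhammer b n\<bar> \<le> c^n"
proof (induction n)
  case 0 then show ?case by simp
next
  case (Suc n)
  have pb: "pochhammer b n > 0" using assms(1) by (rule pochhammer_pos)
  have bk: "b + real n > 0" using assms(1) by simp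
  have "\<bar>pochhammer a (Suc n) / pochhammer b (Suc n)\<bar>
      = \<bar>pochhammer a n / pochhammer b n\<bar> * (\<bar>a + n\<bar> / (b + n))"
    by (simp add: pochhammer_Suc abs_mult abs_divide abs_of_pos[OF bk])
  also have "\<dots> \<le> c^n * c"
  proof (rule mult_mono)
    show "\<bar>a + n\<bar> / (b + n) \<le> c" using assms(3)[of n] bk by (simp add: divide_le_eq)
  qed (use Suc assms(2) bk in auto)
  finally show ?case by (simp add: mult.commute)
qed

lemma kummer_bound:
  fixes a b c z :: real
  assumes "b > 0" "c \<ge> 0" "\<And>k::nat. \<bar>a + k\<bar> \<le> c*(b+k)" "z \<ge> 0"
  shows "summable (\<lambda>n. pochhammer a n / pochhammer b n * z ^ n / fact n)"
    and "\<bar>kummerM a b z\<bar> \<le> exp (c*z)"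
proof -
  let ?f = "\<lambda>n. pochhammer a n / pochhammer b n * z ^ n / fact n"
  have le: "\<bar>?f n\<bar> \<le> (c*z)^n / fact n" for n
  proof -
    have "\<bar>?f n\<bar> = \<bar>pochhammer a n / pochhammer b n\<bar> * z^n / fact n"
      using assms(4) by (simp add: abs_mult abs_divide)
    also have "\<dots> \<le> c^n * z^n / fact n"
      by (intro divide_right_mono mult_right_mono poch_ratio_bound assms) (use assms(4) in auto)
    finally show ?thesis by (simp add: power_mult_distrib)
  qed
  have sg: "summable (\<lambda>n. (c*z)^n / fact n)" using exp_sums_real by (rule sums_summable)
  have sa: "summable (\<lambda>n. \<bar>?f n\<bar>)"
    by (rule summable_comparison_test[OF _ sg]) (use le in auto)
  then show "summable ?f" by (rule summable_rabs_cancel)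
  have "\<bar>kummerM a b z\<bar> \<le> (\<Sum>n. \<bar>?f n\<bar>)" unfolding kummerM_def by (rule summable_rabs[OF sa])
  also have "\<dots> \<le> (\<Sum>n. (c*z)^n / fact n)" by (rule suminf_le[OF le sa sg])
  also have "\<dots> = exp (c*z)" using exp_sums_real sums_unique by metis
  finally show "\<bar>kummerM a b z\<bar> \<le> exp (c*z)" .
qed

theorem lemmaA2:
  fixes \<alpha> z :: real
  assumes "\<alpha> \<noteq> 0" and "z > 0"
  shows "(\<forall>lam::real. lam \<le> 3/4 * \<alpha>^2 \<longrightarrow>
            (\<forall>m::int. \<forall>j::nat. j \<in> {0, 1} \<longrightarrow>
              \<bar>kummerM (1/2 + real j + of_int \<bar>m\<bar> + of_int m * \<alpha> / sqrt (\<alpha>^2 - lam))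
                       (1 + real j + 2 * of_int \<bar>m\<bar>) z\<bar> \<le> exp (2 * z)))
       \<and> (\<exists>mc::nat. \<exists>lc::real. 0 < lc \<and> lc \<le> 3/4 * \<alpha>^2 \<and>
            (\<forall>lam::real. 0 < lam \<and> lam < lc \<longrightarrow>
              (\<forall>m::int. \<bar>m\<bar> \<ge> int mc \<longrightarrow>
                kummerM (1/2 + of_int \<bar>m\<bar> + of_int m * \<alpha> / sqrt (\<alpha>^2 - lam))
                        (1 + 2 * of_int \<bar>m\<bar>) z \<ge> 1/2)))"
proof -
  let ?K = "\<lambda>lam::real. sqrt (\<alpha>^2 - lam)"
  have P1: "\<bar>kummerM (1/2 + real j + of_int \<bar>m\<bar> + of_int m * \<alpha> / sqrt (\<alpha>^2 - lam))
                       (1 + real j + 2 * of_int \<bar>m\<bar>) z\<bar> \<le> exp (2 * z)"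
    if lam: "lam \<le> 3/4 * \<alpha>^2" and j: "j \<in> {0, 1}" for lam m j
  proof -
    define k where "k = sqrt (\<alpha>^2 - lam)"
    have a2: "\<alpha>^2 > 0" using assms(1) by simp
    have d: "\<alpha>^2 - lam \<ge> \<alpha>^2/4" using lam by simp
    have "\<alpha>^2 - lam > 0" using d a2 by linarith
    then have kpos: "k > 0" unfolding k_def by simp
    have "(\<bar>\<alpha>\<bar>/2)^2 \<le> \<alpha>^2 - lam" using d by (simp add: power_divide)
    then have "\<bar>\<alpha>\<bar>/2 \<le> k" unfolding k_def by (rule real_le_rsqrt)
    then have r: "\<bar>\<alpha> / k\<bar> \<le> 2" using kpos by (simp add: abs_divide divide_le_eq)
    have mr: "\<bar>of_int m * \<alpha> / k\<bar> \<le> 2 * of_int \<bar>m\<bar>"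
      using mult_mono[OF order_refl r, of "\<bar>of_int m\<bar>"] by (simp add: abs_mult)
    show ?thesis unfolding k_def[symmetric]
    proof (rule kummer_bound(2))
      fix n :: nat
      show "\<bar>1/2 + real j + of_int \<bar>m\<bar> + of_int m * \<alpha> / k + n\<bar> \<le> 2 * (1 + real j + 2 * of_int \<bar>m\<bar> + n)"
      proof -
        have h1: "- (2 * of_int \<bar>m\<bar>) \<le> of_int m * \<alpha> / k \<and> of_int m * \<alpha> / k \<le> 2 * of_int \<bar>m\<bar>"
          using mr by (simp only: abs_le_iff) auto
        have h2: "real j \<ge> 0" "real n \<ge> 0" "(of_int \<bar>m\<bar>::real) \<ge> 0" by auto
        show ?thesis unfolding abs_le_iff using h1 h2 by (simp add: algebra_simps)
      qed
    qed (use assms(2) in auto)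
  qed
  define e0 where "e0 = min 1 (1 / (exp z - 1))"
  have ez: "exp z - 1 > 0" using assms(2) by simp
  have e0pos: "e0 > 0" and e01: "e0 \<le> 1" and e0e: "e0 * (exp z - 1) \<le> 1"
    using ez unfolding e0_def by (auto simp: min_def field_simps)
  define lc where "lc = \<alpha>^2 * (1 - 1/(1+e0)^2)"
  have a2: "\<alpha>^2 > 0" using assms(1) by simp
  have "1 < (1+e0)^2" using e0pos by (intro one_less_power) auto
  then have q1: "1/(1+e0)^2 < 1" by (simp add: divide_less_eq)
  have q2: "1/(1+e0)^2 \<ge> 1/4"
  proof -
    have "(1+e0)^2 \<le> 2^2" using e01 e0pos by (intro power_mono) auto
    then show ?thesis using e0pos by (simp add: field_simps)
  qed
  have lcpos: "lc > 0" unfolding lc_def using a2 q1 by simp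
  have lcle: "lc \<le> 3/4 * \<alpha>^2" unfolding lc_def
    using mult_left_mono[of "1 - 1/(1+e0)^2" "3/4" "\<alpha>^2"] a2 q2 by (simp add: mult.commute)
  have P2: "kummerM (1/2 + of_int \<bar>m\<bar> + of_int m * \<alpha> / sqrt (\<alpha>^2 - lam))
                        (1 + 2 * of_int \<bar>m\<bar>) z \<ge> 1/2"
    if lam: "0 < lam" "lam < lc" for lam m
  proof -
    define k where "k = sqrt (\<alpha>^2 - lam)"
    have "(\<bar>\<alpha>\<bar>/(1+e0))^2 = \<alpha>^2 * (1/(1+e0)^2)" by (simp add: power_divide)
    also have "\<dots> < \<alpha>^2 - lam" using lam unfolding lc_def by (simp add: algebra_simps)
    finally have kk: "\<bar>\<alpha>\<bar>/(1+e0) < k" unfolding k_def by (rule real_less_rsqrt)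
    moreover have "\<bar>\<alpha>\<bar>/(1+e0) > 0" using assms(1) e0pos by simp
    ultimately have kpos: "k > 0" by linarith
    have "\<bar>\<alpha>\<bar> < (1+e0) * k" using kk e0pos by (simp add: divide_less_eq mult.commute)
    then have r: "\<bar>\<alpha> / k\<bar> \<le> 1 + e0" using kpos by (simp add: abs_divide divide_le_eq)
    have mr: "\<bar>of_int m * \<alpha> / k\<bar> \<le> (1+e0) * of_int \<bar>m\<bar>"
      using mult_mono[OF order_refl r, of "\<bar>of_int m\<bar>"] by (simp add: abs_mult mult.commute)
    define a where "a = 1/2 + of_int \<bar>m\<bar> + of_int m * \<alpha> / k"
    define b :: real where "b = 1 + 2 * of_int \<bar>m\<bar>"
    have bpos: "b > 0" unfolding b_def by simp
    let ?f = "\<lambda>n. pochhammer a n / pochhammer b n * z ^ n / fact n"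
    have sf: "summable ?f"
    proof (rule kummer_bound(1))
      fix n :: nat
      show "\<bar>a + n\<bar> \<le> 2 * (b + n)"
      proof -
        have "(1+e0) * of_int \<bar>m\<bar> \<le> 2 * (of_int \<bar>m\<bar>::real)"
          using e01 by (intro mult_right_mono) auto
        then have h1: "\<bar>of_int m * \<alpha> / k\<bar> \<le> 2 * of_int \<bar>m\<bar>" using mr by (rule_tac order_trans) auto
        then have h1: "- (2 * of_int \<bar>m\<bar>) \<le> of_int m * \<alpha> / k \<and> of_int m * \<alpha> / k \<le> 2 * of_int \<bar>m\<bar>"
          by (simp only: abs_le_iff) auto
        have h2: "real n \<ge> 0" "(of_int \<bar>m\<bar>::real) \<ge> 0" by auto
        show ?thesis unfolding abs_le_iff a_def b_def using h1 h2 by (simp add: algebra_simps)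
      qed
    qed (use assms(2) bpos in auto)
    have split: "kummerM a b z = 1 + (\<Sum>n. ?f (Suc n))"
      unfolding kummerM_def using suminf_split_head[OF sf] by simp
    have "(\<Sum>n. ?f (Suc n)) \<ge> -1/2"
    proof (cases "a > 0")
      case True
      have "0 \<le> (\<Sum>n. ?f (Suc n))"
      proof (rule suminf_nonneg)
        show "summable (\<lambda>n. ?f (Suc n))" using summable_Suc_iff[of ?f] sf by blast
        fix n
        have "pochhammer a (Suc n) \<ge> 0" using True by (rule pochhammer_nonneg)
        moreover have "pochhammer b (Suc n) > 0" using bpos by (rule pochhammer_pos)
        ultimately show "0 \<le> ?f (Suc n)" using assms(2) by simp
      qed
      then show ?thesis by simp
    next
      case False
      have aa: "-a \<le> b * e0 / 2"
      proof -
        have h1: "- ((1+e0) * of_int \<bar>m\<bar>) \<le> of_int m * \<alpha> / k"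
          using mr by (simp only: abs_le_iff) auto
        have h2: "e0 * (of_int \<bar>m\<bar>::real) \<ge> 0" using e0pos by auto
        have h3: "b * e0 / 2 = e0/2 + e0 * of_int \<bar>m\<bar>" by (simp add: b_def algebra_simps)
        have h4: "(1+e0) * (of_int \<bar>m\<bar>::real) = of_int \<bar>m\<bar> + e0 * of_int \<bar>m\<bar>" by (simp add: algebra_simps)
        show ?thesis unfolding h3 using h1 h4 e0pos unfolding a_def by linarith
      qed
      have be: "b * e0 \<le> b * 1" using e01 bpos by (intro mult_left_mono) auto
      have ab: "\<bar>a\<bar> \<le> b" using aa False bpos be by linarith
      have g: "\<bar>?f (Suc n)\<bar> \<le> (e0/2) * (z ^ Suc n / fact (Suc n))" for n
      proof -
        have rr: "\<bar>pochhammer (a+1) n / pochhammer (b+1) n\<bar> \<le> 1^n"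
          by (rule poch_ratio_bound) (use ab bpos in \<open>auto simp: abs_le_iff\<close>)
        have "\<bar>?f (Suc n)\<bar> = (\<bar>a\<bar>/b) * \<bar>pochhammer (a+1) n / pochhammer (b+1) n\<bar> * (z ^ Suc n / fact (Suc n))"
          using assms(2) bpos by (simp only: pochhammer_rec) (simp add: abs_mult abs_divide)
        also have "\<dots> \<le> (e0/2) * 1 * (z ^ Suc n / fact (Suc n))"
        proof (intro mult_right_mono mult_mono)
          have "\<bar>a\<bar>/b \<le> (b * e0 / 2)/b" using aa False bpos by (intro divide_right_mono) auto
          also have "\<dots> = e0/2" using bpos by simp
          finally show "\<bar>a\<bar>/b \<le> e0/2" .
        qed (use rr e0pos assms(2) in auto)
        finally show ?thesis by simp
      qed
      have es: "(\<lambda>n. z ^ Suc n / fact (Suc n)) sums (exp z - 1)"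
        using exp_sums_real[of z] by (subst sums_Suc_iff) simp
      have es2: "(\<lambda>n. (e0/2) * (z ^ Suc n / fact (Suc n))) sums ((e0/2) * (exp z - 1))"
        by (rule sums_mult[OF es])
      have sa: "summable (\<lambda>n. \<bar>?f (Suc n)\<bar>)"
        by (rule summable_comparison_test[OF _ sums_summable[OF es2]]) (use g in auto)
      have "\<bar>\<Sum>n. ?f (Suc n)\<bar> \<le> (\<Sum>n. \<bar>?f (Suc n)\<bar>)" by (rule summable_rabs[OF sa])
      also have "\<dots> \<le> (e0/2) * (exp z - 1)"
        using suminf_le[OF g sa sums_summable[OF es2]] sums_unique[OF es2] by simp
      also have "\<dots> \<le> 1/2" using e0e by simp
      finally show ?thesis by simp
    qed
    then show ?thesis using split unfolding a_def b_def k_def by simp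
  qed
  show ?thesis
    apply (intro conjI allI impI)
     apply (rule P1; simp)
    apply (rule exI[of _ 0], rule exI[of _ lc])
    using lcpos lcle P2 by auto
qed

end
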